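(* Let $b\in\mathbb{R}$ and let $\gamma_0>0$, $\gamma_1>0$, $\gamma_2<0$, $\gamma_3<0$ be fixed (independent of $B$). For a parameter $B>0$, let $u=u(\cdot\,;B)$ be the solution of \[ u''''(x)=B\,u(x),\qquad x\in\mathbb{R}, \] with $u(b)=\gamma_0$, $u'(b)=\gamma_1$, $u''(b)=\gamma_2$, $u'''(b)=\gamma_3$. For $j=0,1,2,3$ let $z_j=z_j(B)$ denote the smallest zero of $u^{(j)}$ in the interval $(b,\infty)$, with the convention $z_j=\infty$ if $u^{(j)}$ does not vanish in $(b,\infty)$. Then there exists $B>0$ such that $z_1=z_3$. *)

theory Defs
  imports "HOL-Analysis.Analysis"
begin

definition is_solution ::
  "real \<Rightarrow> real \<Rightarrow> real \<Rightarrow> real \<Rightarrow> real \<Rightarrow> real \<Rightarrow> (real \<Rightarrow> real) \<Rightarrow> bool" where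
  "is_solution B b g0 g1 g2 g3 u \<longleftrightarrow>
     (\<forall>j<4. \<forall>x. ((deriv ^^ j) u has_real_derivative (deriv ^^ Suc j) u x) (at x)) \<and>
     (\<forall>x. (deriv ^^ 4) u x = B * u x) \<and>
     u b = g0 \<and> deriv u b = g1 \<and> (deriv ^^ 2) u b = g2 \<and> (deriv ^^ 3) u b = g3"

definition first_zero :: "(real \<Rightarrow> real) \<Rightarrow> real \<Rightarrow> ereal" where
  "first_zero f b = Inf (ereal ` {x. b < x \<and> f x = 0})"

end

theory Submission
  imports Defs
begin


lemma aux_hcs:
  fixes x :: real assumes "0 \<le> x" "x \<le> pi/2"
  shows "sinh x * cos x \<le> cosh x * sin x"
proof -
  let ?h = "\<lambda>x::real. cosh x * sin x - sinh x * cos x"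
  have "?h 0 \<le> ?h x"
  proof (rule DERIV_nonneg_imp_nondecreasing[OF assms(1)])
    fix y :: real assume y: "0 \<le> y" "y \<le> x"
    have "DERIV ?h y :> 2 * sinh y * sin y"
      by (auto intro!: derivative_eq_intros simp: algebra_simps)
    moreover have "0 \<le> 2 * sinh y * sin y"
      using y assms by (intro mult_nonneg_nonneg) (auto intro!: sin_ge_zero)
    ultimately show "\<exists>d. DERIV ?h y :> d \<and> 0 \<le> d" by blast
  qed
  then show ?thesis by simp
qed

lemma ratio:
  fixes s t :: real assumes "0 < s" "s \<le> t" "t < pi/2"
  shows "sinh s * sin t \<le> sinh t * sin s"
proof -
  let ?f = "\<lambda>x::real. sinh x / sin x"
  have "?f s \<le> ?f t"
  proof (rule DERIV_nonneg_imp_nondecreasing[OF assms(2)])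
    fix y :: real assume y: "s \<le> y" "y \<le> t"
    have sp: "0 < sin y" using y assms by (intro sin_gt_zero2) auto
    have "DERIV ?f y :> (cosh y * sin y - sinh y * cos y) / (sin y)^2"
      using sp by (auto intro!: derivative_eq_intros simp: power2_eq_square)
    moreover have "0 \<le> (cosh y * sin y - sinh y * cos y) / (sin y)^2"
      using aux_hcs[of y] y assms by auto
    ultimately show "\<exists>d. DERIV ?f y :> d \<and> 0 \<le> d" by blast
  qed
  moreover have "0 < sin s" "0 < sin t" using assms by (auto intro!: sin_gt_zero2)
  ultimately show ?thesis by (simp add: divide_simps mult.commute)
qed

lemma key:
  fixes A Bs C D t1 t :: real
  assumes t1: "0 < t1" "t1 < pi/2" and C: "C > 0" and D: "D = C * tan t1"
    and q: "A * sinh t1 + Bs * cosh t1 = 0" and BD: "\<bar>Bs\<bar> < D"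
    and t: "0 \<le> t" "t < t1"
  shows "\<bar>A * sinh t + Bs * cosh t\<bar> < -(C * sin t - D * cos t)"
proof -
  have ch: "cosh t1 > 0" by simp
  have co: "cos t1 > 0" using t1 by (intro cos_gt_zero_pi) auto
  have si: "sin t1 > 0" using t1 by (intro sin_gt_zero2) auto
  have sh: "sinh t1 > 0" using t1 by simp
  define s where "s = t1 - t"
  have s: "0 < s" "s \<le> t1" using t s_def by auto
  have ss: "sin s > 0" using s t1 by (intro sin_gt_zero2) auto
  have shs: "sinh s > 0" using s by simp
  have Bs: "Bs = - A * sinh t1 / cosh t1" using q ch by (simp add: field_simps) 
  have qe: "A * sinh t + Bs * cosh t = - A * sinh s / cosh t1"
    using ch unfolding Bs s_def by (simp add: sinh_diff field_simps)
  have pe: "C * sin t - D * cos t = - C * sin s / cos t1"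
    using co unfolding D s_def by (simp add: sin_diff tan_def field_simps)
  have "\<bar>A\<bar> * sinh t1 / cosh t1 < C * sin t1 / cos t1"
    using BD sh unfolding Bs D using ch by (simp add: tan_def abs_mult abs_divide)
  hence i1: "\<bar>A\<bar> * sinh t1 * cos t1 < C * sin t1 * cosh t1"
    using ch co by (simp add: field_simps)
  have r: "sinh s * sin t1 \<le> sinh t1 * sin s" using ratio[OF s t1(2)] .
  have "\<bar>A\<bar> * sinh s * cos t1 * sin t1 \<le> \<bar>A\<bar> * sinh t1 * cos t1 * sin s"
    using r co by (smt (verit) abs_ge_zero mult.assoc mult.commute mult_left_mono mult_right_mono)
  also have "\<dots> < C * sin t1 * cosh t1 * sin s"
    using i1 ss by (simp add: mult_strict_right_mono)
  finally have "\<bar>A\<bar> * sinh s * cos t1 < C * sin s * cosh t1"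
    using si by (smt (verit) mult.assoc mult.commute mult_less_cancel_right_pos)
  hence "\<bar>A\<bar> * sinh s / cosh t1 < C * sin s / cos t1"
    using ch co by (simp add: field_simps)
  then show ?thesis unfolding qe pe using shs ch C
    by (simp add: abs_mult abs_divide abs_minus_cancel)
qed



lemma two_ab: "2 * a * b \<le> a^2 + (b::real)^2"
  using sum_squares_bound[of a b] by simp

lemma uniq:
  assumes su: "is_solution B b g0 g1 g2 g3 u" and sv: "is_solution B b g0 g1 g2 g3 v"
    and x: "b \<le> x" and j: "j < 4"
  shows "(deriv ^^ j) v x = (deriv ^^ j) u x"
proof -
  define w where "w = (\<lambda>j y. (deriv ^^ j) v y - (deriv ^^ j) u y)"
  have d: "(w j has_real_derivative w (Suc j) y) (at y)" if "j < 4" for j y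
    unfolding w_def using su sv that unfolding is_solution_def
    by (auto intro!: DERIV_diff)
  have d0: "(w 0 has_real_derivative w 1 y) (at y)" for y using d[of 0 y] by simp
  have d1: "(w 1 has_real_derivative w 2 y) (at y)" for y using d[of 1 y] by (simp add: numeral_2_eq_2)
  have d2: "(w 2 has_real_derivative w 3 y) (at y)" for y using d[of 2 y] by (simp add: numeral_3_eq_3 numeral_2_eq_2)
  have d3: "(w 3 has_real_derivative w 4 y) (at y)" for y using d[of 3 y] by (simp add: eval_nat_numeral)
  have w4: "w 4 y = B * w 0 y" for y using su sv unfolding is_solution_def w_def by (simp add: algebra_simps)
  have wb: "w i b = 0" if "i < 4" for i
  proof -
    have "i = 0 \<or> i = 1 \<or> i = 2 \<or> i = 3" using that by auto
    then show ?thesis using su sv unfolding is_solution_def w_def by auto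
  qed
  define c where "c = 2 + \<bar>B\<bar>"
  define E where "E = (\<lambda>y. (w 0 y)^2 + (w 1 y)^2 + (w 2 y)^2 + (w 3 y)^2)"
  define F where "F = (\<lambda>y. E y * exp (- (c * y)))"
  have Eder: "(E has_real_derivative 2 * (w 0 y * w 1 y + w 1 y * w 2 y + w 2 y * w 3 y + w 3 y * (B * w 0 y))) (at y)" for y
    unfolding E_def using d0[of y] d1[of y] d2[of y] d3[of y] w4[of y]
    by (auto intro!: derivative_eq_intros simp: algebra_simps)
  have Ebound: "2 * (w 0 y * w 1 y + w 1 y * w 2 y + w 2 y * w 3 y + w 3 y * (B * w 0 y)) \<le> c * E y" for y
  proof -
    have a1: "2 * w 0 y * w 1 y \<le> (w 0 y)^2 + (w 1 y)^2" by (rule two_ab)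
    have a2: "2 * w 1 y * w 2 y \<le> (w 1 y)^2 + (w 2 y)^2" by (rule two_ab)
    have a3: "2 * w 2 y * w 3 y \<le> (w 2 y)^2 + (w 3 y)^2" by (rule two_ab)
    have a4: "\<bar>2 * w 3 y * w 0 y\<bar> \<le> (w 3 y)^2 + (w 0 y)^2"
      using two_ab[of "\<bar>w 3 y\<bar>" "\<bar>w 0 y\<bar>"] by (simp add: abs_mult)
    have "B * (2 * w 3 y * w 0 y) \<le> \<bar>B\<bar> * \<bar>2 * w 3 y * w 0 y\<bar>"
      by (metis abs_ge_self abs_mult)
    also have "\<dots> \<le> \<bar>B\<bar> * ((w 3 y)^2 + (w 0 y)^2)" using a4 by (simp add: mult_left_mono)
    finally have a5: "B * (2 * w 3 y * w 0 y) \<le> \<bar>B\<bar> * ((w 3 y)^2 + (w 0 y)^2)" .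
    have n: "0 \<le> \<bar>B\<bar> * (w 1 y)^2" "0 \<le> \<bar>B\<bar> * (w 2 y)^2" "0 \<le> (w 0 y)^2" "0 \<le> (w 1 y)^2"
       "0 \<le> (w 2 y)^2" "0 \<le> (w 3 y)^2" by simp_all
    have e: "c * E y = 2 * (w 0 y)^2 + 2 * (w 1 y)^2 + 2 * (w 2 y)^2 + 2 * (w 3 y)^2
       + \<bar>B\<bar> * (w 0 y)^2 + \<bar>B\<bar> * (w 1 y)^2 + \<bar>B\<bar> * (w 2 y)^2 + \<bar>B\<bar> * (w 3 y)^2"
      unfolding c_def E_def by (simp add: algebra_simps)
    have l: "2 * (w 0 y * w 1 y + w 1 y * w 2 y + w 2 y * w 3 y + w 3 y * (B * w 0 y)) =
       2 * w 0 y * w 1 y + 2 * w 1 y * w 2 y + 2 * w 2 y * w 3 y + B * (2 * w 3 y * w 0 y)"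
      by (simp add: algebra_simps)
    show ?thesis unfolding e l using a1 a2 a3 a5 n by (simp only: distrib_left)
  qed
  have "F x \<le> F b"
  proof (rule DERIV_nonpos_imp_nonincreasing[OF x])
    fix y assume "b \<le> y" "y \<le> x"
    have "(F has_real_derivative (2 * (w 0 y * w 1 y + w 1 y * w 2 y + w 2 y * w 3 y + w 3 y * (B * w 0 y)) - c * E y) * exp (- (c * y))) (at y)"
      unfolding F_def using Eder[of y]
      by (auto intro!: derivative_eq_intros simp: algebra_simps)
    moreover have "(2 * (w 0 y * w 1 y + w 1 y * w 2 y + w 2 y * w 3 y + w 3 y * (B * w 0 y)) - c * E y) * exp (- (c * y)) \<le> 0"
      using Ebound[of y] by (simp add: mult_nonpos_nonneg)
    ultimately show "\<exists>d. DERIV F y :> d \<and> d \<le> 0" by blast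
  qed
  moreover have "F b = 0" unfolding F_def E_def using wb by simp
  moreover have "E x \<ge> 0" unfolding E_def by simp
  ultimately have "E x = 0" unfolding F_def by (simp add: mult_le_0_iff)
  then have "w 0 x = 0 \<and> w 1 x = 0 \<and> w 2 x = 0 \<and> w 3 x = 0" unfolding E_def
    by (smt (verit) zero_le_power2 zero_eq_power2)
  moreover have "j = 0 \<or> j = 1 \<or> j = 2 \<or> j = 3" using j by auto
  ultimately show ?thesis unfolding w_def by auto
qed



definition usol :: "real \<Rightarrow> real \<Rightarrow> real \<Rightarrow> real \<Rightarrow> real \<Rightarrow> real \<Rightarrow> real \<Rightarrow> real" where
  "usol a bb c d k b x = a * cosh (k*(x-b)) + bb * sinh (k*(x-b)) + c * cos (k*(x-b)) + d * sin (k*(x-b))"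

lemma usol_deriv:
  "(usol a bb c d k b has_real_derivative usol (k*bb) (k*a) (k*d) (-(k*c)) k b x) (at x)"
  unfolding usol_def by (auto intro!: derivative_eq_intros simp: algebra_simps)

lemma usol_deriv_fun: "deriv (usol a bb c d k b) = usol (k*bb) (k*a) (k*d) (-(k*c)) k b"
  by (rule ext, rule DERIV_imp_deriv, rule usol_deriv)

lemma usol_iter:
  "(deriv ^^ 1) (usol a bb c d k b) = usol (k*bb) (k*a) (k*d) (-(k*c)) k b"
  "(deriv ^^ 2) (usol a bb c d k b) = usol (k^2*a) (k^2*bb) (-(k^2*c)) (-(k^2*d)) k b"
  "(deriv ^^ 3) (usol a bb c d k b) = usol (k^3*bb) (k^3*a) (-(k^3*d)) (k^3*c) k b"
  "(deriv ^^ 4) (usol a bb c d k b) = usol (k^4*a) (k^4*bb) (k^4*c) (k^4*d) k b"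
  by (simp_all add: eval_nat_numeral usol_deriv_fun algebra_simps)

lemma usol_scale: "usol (m*a) (m*bb) (m*c) (m*d) k b x = m * usol a bb c d k b x"
  unfolding usol_def by (simp add: algebra_simps)

lemma usol_iter_ex: "\<exists>a' b' c' d'. (deriv ^^ j) (usol a bb c d k b) = usol a' b' c' d' k b"
proof (induction j)
  case 0 then show ?case by auto
next
  case (Suc j)
  then obtain a' b' c' d' where "(deriv ^^ j) (usol a bb c d k b) = usol a' b' c' d' k b" by blast
  then show ?case by (auto simp: usol_deriv_fun)
qed

lemma usol_iter_deriv:
  "((deriv ^^ j) (usol a bb c d k b) has_real_derivative (deriv ^^ Suc j) (usol a bb c d k b) x) (at x)"
proof -
  obtain a' b' c' d' where e: "(deriv ^^ j) (usol a bb c d k b) = usol a' b' c' d' k b"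
    using usol_iter_ex by blast
  show ?thesis unfolding funpow.simps o_def e using usol_deriv usol_deriv_fun by metis
qed

lemma usol_solution:
  assumes k: "k > 0"
  shows "is_solution (k^4) b g0 g1 g2 g3
     (usol ((g0*k^2+g2)/(2*k^2)) ((g1*k^2+g3)/(2*k^3)) ((g0*k^2-g2)/(2*k^2)) ((g1*k^2-g3)/(2*k^3)) k b)"
  unfolding is_solution_def
proof (intro conjI allI impI)
  show "((deriv ^^ j) (usol ((g0*k^2+g2)/(2*k^2)) ((g1*k^2+g3)/(2*k^3)) ((g0*k^2-g2)/(2*k^2)) ((g1*k^2-g3)/(2*k^3)) k b)
     has_real_derivative (deriv ^^ Suc j) (usol ((g0*k^2+g2)/(2*k^2)) ((g1*k^2+g3)/(2*k^3)) ((g0*k^2-g2)/(2*k^2)) ((g1*k^2-g3)/(2*k^3)) k b) x) (at x)" for j x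
    by (rule usol_iter_deriv)
next
  fix x show "(deriv ^^ 4) (usol ((g0*k^2+g2)/(2*k^2)) ((g1*k^2+g3)/(2*k^3)) ((g0*k^2-g2)/(2*k^2)) ((g1*k^2-g3)/(2*k^3)) k b) x = k^4 * (usol ((g0*k^2+g2)/(2*k^2)) ((g1*k^2+g3)/(2*k^3)) ((g0*k^2-g2)/(2*k^2)) ((g1*k^2-g3)/(2*k^3)) k b) x"
    by (simp only: usol_iter(4) usol_scale)
next
  show "(deriv ^^ 2) (usol ((g0*k^2+g2)/(2*k^2)) ((g1*k^2+g3)/(2*k^3)) ((g0*k^2-g2)/(2*k^2)) ((g1*k^2-g3)/(2*k^3)) k b) b = g2"
    unfolding usol_iter(2) using k by (simp add: usol_def field_simps)
next
  show "(deriv ^^ 3) (usol ((g0*k^2+g2)/(2*k^2)) ((g1*k^2+g3)/(2*k^3)) ((g0*k^2-g2)/(2*k^2)) ((g1*k^2-g3)/(2*k^3)) k b) b = g3"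
    unfolding usol_iter(3) using k by (simp add: usol_def field_simps)
next
  show "deriv (usol ((g0*k^2+g2)/(2*k^2)) ((g1*k^2+g3)/(2*k^3)) ((g0*k^2-g2)/(2*k^2)) ((g1*k^2-g3)/(2*k^3)) k b) b = g1"
    unfolding usol_deriv_fun using k by (simp add: usol_def field_simps power2_eq_square power3_eq_cube)
next
  show "usol ((g0*k^2+g2)/(2*k^2)) ((g1*k^2+g3)/(2*k^3)) ((g0*k^2-g2)/(2*k^2)) ((g1*k^2-g3)/(2*k^3)) k b b = g0"
    using k by (simp add: usol_def field_simps)
qed



lemma fz: "z \<in> S \<Longrightarrow> (\<forall>x\<in>S. z \<le> x) \<Longrightarrow> Inf (ereal ` S) = ereal z"
  by (rule antisym) (auto intro: Inf_lower Inf_greatest)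

theorem lemma1:
  fixes b g0 g1 g2 g3 :: real
  assumes "g0 > 0" and "g1 > 0" and "g2 < 0" and "g3 < 0"
  shows "\<exists>B>0. (\<exists>u. is_solution B b g0 g1 g2 g3 u) \<and>
           (\<forall>u. is_solution B b g0 g1 g2 g3 u \<longrightarrow>
                first_zero (deriv u) b = first_zero ((deriv ^^ 3) u) b)"
proof -
  define a where "a = (\<lambda>k::real. (g0*k^2+g2)/(2*k^2))"
  define bq where "bq = (\<lambda>k::real. (g1*k^2+g3)/(2*k^3))"
  define c where "c = (\<lambda>k::real. (g0*k^2-g2)/(2*k^2))"
  define d where "d = (\<lambda>k::real. (g1*k^2-g3)/(2*k^3))"
  define t1 where "t1 = (\<lambda>k. arctan (d k / c k))"
  define G where "G = (\<lambda>k. a k * sinh (t1 k) + bq k * cosh (t1 k))"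
  have cpos: "c k > 0" if "k > 0" for k
  proof -
    have "g2 < g0*k^2" using that assms by (smt (verit) mult_pos_pos zero_less_power)
    then show ?thesis unfolding c_def using that assms by (auto intro!: divide_pos_pos)
  qed
  have dpos: "d k > 0" if "k > 0" for k
  proof -
    have "g3 < g1*k^2" using that assms by (smt (verit) mult_pos_pos zero_less_power)
    then show ?thesis unfolding d_def using that assms by (auto intro!: divide_pos_pos)
  qed
  have t1pos: "0 < t1 k" "t1 k < pi/2" if "k > 0" for k
    unfolding t1_def using cpos[OF that] dpos[OF that] using arctan_ubound[of "d k / c k"] by auto
  define m where "m = min (-g2/g0) (-g3/g1)"
  define M where "M = max (-g2/g0) (-g3/g1)"
  have mpos: "m > 0" unfolding m_def using assms by (auto simp: divide_neg_pos)
  have mM: "m \<le> M" unfolding m_def M_def by auto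
  have mle: "m \<le> -g2/g0" "m \<le> -g3/g1" unfolding m_def by auto
  have Mge: "-g2/g0 \<le> M" "-g3/g1 \<le> M" unfolding M_def by auto
  define k0 where "k0 = sqrt (m/2)"
  define k1 where "k1 = sqrt (M+1)"
  have k0pos: "k0 > 0" unfolding k0_def using mpos by simp
  have k0sq: "k0^2 = m/2" unfolding k0_def using mpos by simp
  have k1sq: "k1^2 = M+1" unfolding k1_def using mpos mM by simp
  have k01: "k0 \<le> k1" unfolding k0_def k1_def using mpos mM by simp
  have Gk0: "G k0 \<le> 0"
  proof -
    have hk: "k0^2 < -g2/g0" using k0sq mpos mle by linarith
    have "g0 * k0^2 < -g2" using mult_strict_left_mono[OF hk, of g0] assms by simp
    hence "a k0 < 0" unfolding a_def using k0pos by (simp add: divide_neg_pos)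
    moreover have hk: "k0^2 < -g3/g1" using k0sq mpos mle by linarith
    have "g1 * k0^2 < -g3" using mult_strict_left_mono[OF hk, of g1] assms by simp
    hence "bq k0 < 0" unfolding bq_def using k0pos by (simp add: divide_neg_pos)
    moreover have "sinh (t1 k0) > 0" using t1pos[OF k0pos] by simp
    ultimately show ?thesis unfolding G_def
      by (smt (verit) cosh_real_pos mult_neg_pos)
  qed
  have Gk1: "G k1 \<ge> 0"
  proof -
    have k1pos: "k1 > 0" using k0pos k01 by simp
    have hk: "k1^2 > -g2/g0" using k1sq Mge by linarith
    have "g0 * k1^2 > -g2" using mult_strict_left_mono[OF hk, of g0] assms by simp
    hence "a k1 > 0" unfolding a_def using k1pos by simp
    moreover have hk: "k1^2 > -g3/g1" using k1sq Mge by linarith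
    have "g1 * k1^2 > -g3" using mult_strict_left_mono[OF hk, of g1] assms by simp
    hence "bq k1 > 0" unfolding bq_def using k1pos by simp
    moreover have "sinh (t1 k1) > 0" using t1pos[OF k1pos] by simp
    ultimately show ?thesis unfolding G_def
      by (smt (verit) cosh_real_pos mult_pos_pos)
  qed
  have cont: "continuous_on {k0..k1} G"
  proof -
    have nz: "\<forall>k\<in>{k0..k1}. k \<noteq> 0" using k0pos by auto
    have cnz: "\<forall>k\<in>{k0..k1}. c k \<noteq> 0" by (metis atLeastAtMost_iff cpos k0pos less_le_trans less_irrefl)
    have cc: "continuous_on {k0..k1} c" unfolding c_def using nz by (intro continuous_intros) auto
    have cd: "continuous_on {k0..k1} d" unfolding d_def using nz by (intro continuous_intros) auto
    have ct: "continuous_on {k0..k1} t1" unfolding t1_def using cc cd cnz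
      by (intro continuous_intros) auto
    show ?thesis unfolding G_def a_def bq_def using nz ct
      by (intro continuous_intros) auto
  qed
  obtain k where k: "k0 \<le> k" "k \<le> k1" "G k = 0" using IVT'[of G k0 0 k1] Gk0 Gk1 k01 cont by auto
  have kpos: "k > 0" using k k0pos by simp
  define A where "A = a k"
  define BB where "BB = bq k"
  define C where "C = c k"
  define D where "D = d k"
  define t where "t = t1 k"
  define u where "u = usol A BB C D k b"
  have sol: "is_solution (k^4) b g0 g1 g2 g3 u"
    unfolding u_def A_def BB_def C_def D_def a_def bq_def c_def d_def using usol_solution[OF kpos] by simp
  have Cp: "C > 0" unfolding C_def using cpos[OF kpos] .
  have Dp: "D > 0" unfolding D_def using dpos[OF kpos] .
  have tb: "0 < t" "t < pi/2" unfolding t_def using t1pos[OF kpos] by auto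
  have Dt: "D = C * tan t" unfolding t_def t1_def tan_arctan using Cp by (simp add: C_def D_def)
  have q0: "A * sinh t + BB * cosh t = 0" using k(3) unfolding G_def A_def BB_def t_def .
  have BD: "\<bar>BB\<bar> < D"
  proof -
    have g: "0 < g1 * k^2" using assms kpos by simp
    have "\<bar>g1*k^2+g3\<bar> < g1*k^2-g3" using g assms by linarith
    moreover have "0 < 2*k^3" using kpos by simp
    ultimately show ?thesis unfolding BB_def D_def bq_def d_def
      by (simp add: abs_divide divide_strict_right_mono)
  qed
  have d1: "deriv u y = k*(A * sinh (k*(y-b)) + BB * cosh (k*(y-b))) - k*(C * sin (k*(y-b)) - D * cos (k*(y-b)))" for y
    unfolding u_def usol_deriv_fun usol_def by (simp add: algebra_simps)
  have d3: "(deriv^^3) u y = k^3*(A * sinh (k*(y-b)) + BB * cosh (k*(y-b))) + k^3*(C * sin (k*(y-b)) - D * cos (k*(y-b)))" for y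
    unfolding u_def usol_iter(3) usol_def by (simp add: algebra_simps)
  define z where "z = b + t/k"
  have zb: "b < z" unfolding z_def using tb kpos by simp
  have kz: "k*(z-b) = t" unfolding z_def using kpos by simp
  have before: "deriv u y > 0 \<and> (deriv^^3) u y < 0" if y: "b < y" "y < z" for y
  proof -
    have s: "0 \<le> k*(y-b)" "k*(y-b) < t" using y kpos kz by (auto simp: mult_strict_left_mono)
    have K: "\<bar>A * sinh (k*(y-b)) + BB * cosh (k*(y-b))\<bar> < -(C * sin (k*(y-b)) - D * cos (k*(y-b)))"
      by (rule key[OF tb Cp Dt q0 BD s])
    have "0 < (A * sinh (k*(y-b)) + BB * cosh (k*(y-b))) - (C * sin (k*(y-b)) - D * cos (k*(y-b)))"
      using K by linarith
    hence "0 < k * ((A * sinh (k*(y-b)) + BB * cosh (k*(y-b))) - (C * sin (k*(y-b)) - D * cos (k*(y-b))))"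
      using kpos by simp
    moreover have "(A * sinh (k*(y-b)) + BB * cosh (k*(y-b))) + (C * sin (k*(y-b)) - D * cos (k*(y-b))) < 0"
      using K by linarith
    hence "k^3 * ((A * sinh (k*(y-b)) + BB * cosh (k*(y-b))) + (C * sin (k*(y-b)) - D * cos (k*(y-b)))) < 0"
      using kpos by (simp add: mult_pos_neg)
    ultimately show ?thesis unfolding d1 d3 by (simp add: algebra_simps)
  qed
  have p0: "C * sin t - D * cos t = 0"
  proof -
    have "cos t \<noteq> 0" using tb cos_gt_zero_pi[of t] by auto
    then show ?thesis unfolding Dt by (simp add: tan_def)
  qed
  have atz: "deriv u z = 0" "(deriv^^3) u z = 0" unfolding d1 d3 kz using q0 p0 by simp_all
  have Z1: "first_zero (deriv u) b = ereal z" unfolding first_zero_def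
  proof (rule fz)
    show "z \<in> {x. b < x \<and> deriv u x = 0}" using zb atz by simp
    show "\<forall>x\<in>{x. b < x \<and> deriv u x = 0}. z \<le> x"
    proof
      fix x assume "x \<in> {x. b < x \<and> deriv u x = 0}"
      then show "z \<le> x" using before[of x] by (cases "x < z") auto
    qed
  qed
  have Z3: "first_zero ((deriv^^3) u) b = ereal z" unfolding first_zero_def
  proof (rule fz)
    show "z \<in> {x. b < x \<and> (deriv^^3) u x = 0}" using zb atz by simp
    show "\<forall>x\<in>{x. b < x \<and> (deriv^^3) u x = 0}. z \<le> x"
    proof
      fix x assume "x \<in> {x. b < x \<and> (deriv^^3) u x = 0}"
      then show "z \<le> x" using before[of x] by (cases "x < z") auto
    qed
  qed
  show ?thesis
  proof (intro exI[of _ "k^4"] conjI allI impI)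
    show "0 < k^4" using kpos by simp
    show "\<exists>u. is_solution (k ^ 4) b g0 g1 g2 g3 u" using sol by blast
    fix v assume sv: "is_solution (k ^ 4) b g0 g1 g2 g3 v"
    have e1: "{x. b < x \<and> deriv v x = 0} = {x. b < x \<and> deriv u x = 0}"
      using uniq[OF sol sv, of _ 1] by auto
    have e3: "{x. b < x \<and> (deriv^^3) v x = 0} = {x. b < x \<and> (deriv^^3) u x = 0}"
      using uniq[OF sol sv, of _ 3] by auto
    show "first_zero (deriv v) b = first_zero ((deriv ^^ 3) v) b"
      using Z1 Z3 unfolding first_zero_def e1 e3 by simp
  qed
qed

end
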